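(* For all integers $k\ge 3$ and $n\ge 1$, $$r_o(C_k,K_{n,n})\;\le\;2n^3+(k-3)\,n(2n-1)+n^2.$$
   Context: An ordered graph $G$ on $n$ vertices has vertex set $[n]=\{1,\dots,n\}$ with the natural linear order. An ordered graph $G$ on $[n]$ is contained in an ordered graph $H$ on a linearly ordered vertex set if there is an injective map $f$ from $[n]$ to $V(H)$ with $f(i)<f(j)$ whenever $i<j$ and $f(i)f(j)\in E(H)$ whenever $ij\in E(G)$; such an image is an ordered copy of $G$. $C_k$ is the ordered cycle on $[k]$ with edges $\{i,i+1\}$ for $1\le i\le k-1$ together with $\{1,k\}$. $K_{n,n}$ is the ordered complete bipartite graph on $[2n]$ with edge set $\{ij: 1\le i\le n<j\le 2n\}$. The online ordered Ramsey game for $(G_1,G_2)$ is played by Builder and Painter on the vertex set $\mathbb N$ with its natural order. On each turn Builder selects a previously unselected pair of vertices (an edge) and Painter then colors it red or blue. Builder wins as soon as the colored edges contain an ordered red copy of $G_1$ or an ordered blue copy of $G_2$; Builder tries to minimize and Painter tries to maximize the number of turns. The online ordered Ramsey number $r_o(G_1,G_2)$ is the number of turns after which Builder wins when both players play optimally. *)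

theory Defs
  imports Main "HOL-Library.Extended_Nat"
begin

(* An ordered graph on [m] = {1..m} is given by its size m and its edge set,
   each edge written as a pair (i,j) with i < j. *)
type_synonym ograph = "nat \<times> (nat \<times> nat) set"

definition ocontains :: "ograph \<Rightarrow> (nat \<times> nat) set \<Rightarrow> bool" where
  "ocontains G E \<longleftrightarrow>
     (\<exists>f::nat \<Rightarrow> nat. strict_mono_on {1..fst G} f \<and>
        (\<forall>(i,j)\<in>snd G. (f i, f j) \<in> E))"

definition ocycle :: "nat \<Rightarrow> ograph" where
  "ocycle k = (k, {(i, i+1) | i. 1 \<le> i \<and> i \<le> k - 1} \<union> {(1, k)})"

definition oKnn :: "nat \<Rightarrow> ograph" where
  "oKnn n = (2*n, {(i,j). 1 \<le> i \<and> i \<le> n \<and> n < j \<and> j \<le> 2*n})"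

definition builder_won :: "ograph \<Rightarrow> ograph \<Rightarrow> (nat \<times> nat) set \<Rightarrow> (nat \<times> nat) set \<Rightarrow> bool" where
  "builder_won G1 G2 R B \<longleftrightarrow> ocontains G1 R \<or> ocontains G2 B"

fun builder_wins_within :: "ograph \<Rightarrow> ograph \<Rightarrow> nat \<Rightarrow> (nat \<times> nat) set \<Rightarrow> (nat \<times> nat) set \<Rightarrow> bool" where
  "builder_wins_within G1 G2 0 R B = builder_won G1 G2 R B"
| "builder_wins_within G1 G2 (Suc t) R B =
     (builder_won G1 G2 R B \<or>
      (\<exists>a b. a < b \<and> (a,b) \<notin> R \<and> (a,b) \<notin> B \<and>
         builder_wins_within G1 G2 t (insert (a,b) R) B \<and>
         builder_wins_within G1 G2 t R (insert (a,b) B)))"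

(* online ordered Ramsey number; infinity if Builder cannot force a win *)
definition online_ordered_ramsey :: "ograph \<Rightarrow> ograph \<Rightarrow> enat" where
  "online_ordered_ramsey G1 G2 = (INF t \<in> {t. builder_wins_within G1 G2 t {} {}}. enat t)"

end

theory Submission
  imports Defs
begin

lemma ocontains_mono: "ocontains G E \<Longrightarrow> E \<subseteq> E' \<Longrightarrow> ocontains G E'"
  unfolding ocontains_def by fast

lemma won_mono: "builder_won G1 G2 R B \<Longrightarrow> R \<subseteq> R' \<Longrightarrow> B \<subseteq> B' \<Longrightarrow> builder_won G1 G2 R' B'"
  unfolding builder_won_def using ocontains_mono by blast

lemma won_wins: "builder_won G1 G2 R B \<Longrightarrow> builder_wins_within G1 G2 t R B"
  by (cases t) auto

lemma wins_Suc: "builder_wins_within G1 G2 t R B \<Longrightarrow> builder_wins_within G1 G2 (Suc t) R B"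
proof (induction t arbitrary: R B)
  case 0 thus ?case by simp
next
  case (Suc t)
  show ?case
  proof (cases "builder_won G1 G2 R B")
    case True thus ?thesis by (rule won_wins)
  next
    case False
    with Suc.prems obtain a b where ab: "a < b" "(a,b) \<notin> R" "(a,b) \<notin> B"
      "builder_wins_within G1 G2 t (insert (a,b) R) B"
      "builder_wins_within G1 G2 t R (insert (a,b) B)" by auto
    have "builder_wins_within G1 G2 (Suc t) (insert (a,b) R) B"
         "builder_wins_within G1 G2 (Suc t) R (insert (a,b) B)" using ab Suc.IH by auto
    with ab show ?thesis by (subst builder_wins_within.simps) blast
  qed
qed

lemma wins_le: assumes "builder_wins_within G1 G2 t R B" "t \<le> t'" shows "builder_wins_within G1 G2 t' R B"
  using assms(2) by (induction rule: dec_induct) (use assms wins_Suc in auto)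

lemma wins_mono: "builder_wins_within G1 G2 t R B \<Longrightarrow> R \<subseteq> R' \<Longrightarrow> B \<subseteq> B' \<Longrightarrow> builder_wins_within G1 G2 t R' B'"
proof (induction t arbitrary: R B R' B')
  case 0 thus ?case using won_mono by auto
next
  case (Suc t)
  show ?case
  proof (cases "builder_won G1 G2 R B")
    case True thus ?thesis using won_mono won_wins Suc.prems by metis
  next
    case False
    with Suc.prems obtain a b where ab: "a < b" "(a,b) \<notin> R" "(a,b) \<notin> B"
      "builder_wins_within G1 G2 t (insert (a,b) R) B"
      "builder_wins_within G1 G2 t R (insert (a,b) B)" by auto
    show ?thesis
    proof (cases "(a,b) \<in> R'")
      case True
      hence "insert (a,b) R \<subseteq> R'" using Suc.prems by auto
      then have "builder_wins_within G1 G2 t R' B'" using Suc.IH[OF ab(4)] Suc.prems(3) by simp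
      then show ?thesis by (rule wins_Suc)
    next
      case F1: False
      show ?thesis
      proof (cases "(a,b) \<in> B'")
        case True
        hence "insert (a,b) B \<subseteq> B'" using Suc.prems by auto
        then have "builder_wins_within G1 G2 t R' B'" using Suc.IH[OF ab(5)] Suc.prems(2) by simp
        then show ?thesis by (rule wins_Suc)
      next
        case False
        have "builder_wins_within G1 G2 t (insert (a,b) R') B'"
          using Suc.IH[OF ab(4)] Suc.prems by (meson insert_mono)
        moreover have "builder_wins_within G1 G2 t R' (insert (a,b) B')"
          using Suc.IH[OF ab(5)] Suc.prems by (meson insert_mono)
        ultimately show ?thesis using ab F1 False by (subst builder_wins_within.simps) blast
      qed
    qed
  qed
qed

lemma query: "a < b \<Longrightarrow> builder_wins_within G1 G2 t (insert (a,b) R) B \<Longrightarrow>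
   builder_wins_within G1 G2 t R (insert (a,b) B) \<Longrightarrow> builder_wins_within G1 G2 (Suc t) R B"
proof -
  assume h: "a < b" "builder_wins_within G1 G2 t (insert (a,b) R) B"
   "builder_wins_within G1 G2 t R (insert (a,b) B)"
  show ?thesis
  proof (cases "(a,b) \<in> R")
    case True thus ?thesis using h wins_Suc by (metis insert_absorb)
  next
    case F: False
    show ?thesis
    proof (cases "(a,b) \<in> B")
      case True thus ?thesis using h wins_Suc by (metis insert_absorb)
    next
      case False thus ?thesis using h F by (subst builder_wins_within.simps) blast
    qed
  qed
qed

lemma batch: "finite E \<Longrightarrow> (\<forall>(a,b)\<in>E. a < b) \<Longrightarrow>
  (\<And>F. F \<subseteq> E \<Longrightarrow> builder_wins_within G1 G2 t (R \<union> F) (B \<union> (E - F))) \<Longrightarrow>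
  builder_wins_within G1 G2 (t + card E) R B"
proof (induction E arbitrary: R B rule: finite_induct)
  case empty
  then show ?case using empty.prems(2)[of "{}"] by simp
next
  case (insert e E)
  obtain a b where e: "e = (a,b)" by fastforce
  have ab: "a < b" using insert.prems(1) e by auto
  have 1: "builder_wins_within G1 G2 (t + card E) (insert e R) B"
  proof (rule insert.IH)
    show "\<forall>(a,b)\<in>E. a < b" using insert.prems(1) by auto
    fix F assume F: "F \<subseteq> E"
    have "insert e F \<subseteq> insert e E" using F by auto
    from insert.prems(2)[OF this]
    have "builder_wins_within G1 G2 t (R \<union> insert e F) (B \<union> (insert e E - insert e F))" .
    moreover have "R \<union> insert e F = insert e R \<union> F" by auto
    moreover have "insert e E - insert e F = E - F" using insert.hyps(2) by auto
    ultimately show "builder_wins_within G1 G2 t (insert e R \<union> F) (B \<union> (E - F))" by simp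
  qed
  have 2: "builder_wins_within G1 G2 (t + card E) R (insert e B)"
  proof (rule insert.IH)
    show "\<forall>(a,b)\<in>E. a < b" using insert.prems(1) by auto
    fix F assume F: "F \<subseteq> E"
    have "F \<subseteq> insert e E" using F by auto
    from insert.prems(2)[OF this]
    have "builder_wins_within G1 G2 t (R \<union> F) (B \<union> (insert e E - F))" .
    moreover have "B \<union> (insert e E - F) = insert e B \<union> (E - F)" using insert.hyps(2) F by auto
    ultimately show "builder_wins_within G1 G2 t (R \<union> F) (insert e B \<union> (E - F))" by simp
  qed
  have "builder_wins_within G1 G2 (Suc (t + card E)) R B"
    using query[OF ab] 1 2 e by simp
  thus ?case using insert.hyps by simp
qed

fun pathok :: "(nat \<times> nat) set \<Rightarrow> nat \<Rightarrow> nat \<Rightarrow> nat \<Rightarrow> bool" where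
  "pathok R l 0 v = (l < v \<and> (l,v) \<in> R)"
| "pathok R l (Suc j) v = (\<exists>u. u < v \<and> (u,v) \<in> R \<and> pathok R l j u)"

lemma pathok_mono: "pathok R l j v \<Longrightarrow> R \<subseteq> R' \<Longrightarrow> pathok R' l j v"
  by (induction j arbitrary: v) auto

lemma pathok_path: "pathok R l j v \<Longrightarrow>
  \<exists>g. strict_mono g \<and> g 0 = l \<and> g (Suc j) = v \<and> (\<forall>i\<le>j. (g i, g (Suc i)) \<in> R)"
proof (induction j arbitrary: v)
  case 0
  let ?g = "\<lambda>i::nat. if i = 0 then l else v + (i - 1)"
  have "strict_mono ?g" unfolding strict_mono_Suc_iff using 0 by auto
  thus ?case using 0 by (intro exI[of _ ?g]) auto
next
  case (Suc j)
  then obtain u where u: "u < v" "(u,v) \<in> R" "pathok R l j u" by auto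
  then obtain g where g: "strict_mono g" "g 0 = l" "g (Suc j) = u" "\<forall>i\<le>j. (g i, g (Suc i)) \<in> R"
    using Suc.IH by blast
  let ?h = "\<lambda>i. if i \<le> Suc j then g i else v + (i - Suc (Suc j))"
  have "strict_mono ?h" unfolding strict_mono_Suc_iff
  proof
    fix i
    show "?h i < ?h (Suc i)"
      using g(1) g(3) u(1) by (cases "i < Suc j"; cases "i = Suc j") (auto simp: strict_mono_Suc_iff)
  qed
  moreover have "\<forall>i\<le>Suc j. (?h i, ?h (Suc i)) \<in> R"
  proof (intro allI impI)
    fix i assume "i \<le> Suc j"
    thus "(?h i, ?h (Suc i)) \<in> R" using g u by (cases "i = Suc j") auto
  qed
  ultimately show ?case using g by (intro exI[of _ ?h]) auto
qed

lemma cycle_found: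
  assumes "k \<ge> 3" "pathok R l (k-2) b" "(l,b) \<in> R"
  shows "ocontains (ocycle k) R"
proof -
  obtain g where g: "strict_mono g" "g 0 = l" "g (Suc (k-2)) = b" "\<forall>i\<le>k-2. (g i, g (Suc i)) \<in> R"
    using pathok_path[OF assms(2)] by blast
  let ?f = "\<lambda>i. g (i - 1)"
  have sm: "strict_mono_on {1..fst (ocycle k)} ?f"
    by (rule strict_mono_onI) (use g(1) in \<open>auto simp: ocycle_def strict_mono_def\<close>)
  have ed: "\<forall>(i,j)\<in>snd (ocycle k). (?f i, ?f j) \<in> R"
  proof
    fix x assume "x \<in> snd (ocycle k)"
    then consider (a) i where "x = (i, i+1)" "1 \<le> i" "i \<le> k - 1" | (b) "x = (1,k)"
      unfolding ocycle_def by auto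
    then show "case x of (i,j) \<Rightarrow> (?f i, ?f j) \<in> R"
    proof cases
      case a
      then have "i - 1 \<le> k - 2" using assms(1) by auto
      then have "(g (i-1), g (Suc (i-1))) \<in> R" using g(4) by blast
      moreover have "Suc (i - 1) = i + 1 - 1" using a by auto
      ultimately show ?thesis using a by simp
    next
      case b
      have "k - 1 = Suc (k-2)" using assms(1) by auto
      then show ?thesis using b g assms(3) by simp
    qed
  qed
  show ?thesis unfolding ocontains_def using sm ed by blast
qed

lemma sorted_enum:
  fixes A :: "nat set"
  assumes "finite A"
  obtains xs where "sorted_wrt (<) xs" "set xs = A" "length xs = card A"
proof -
  obtain xs where xs: "sorted_wrt (<) xs" "set xs = A"
    using sorted_list_of_set.finite_set_strict_sorted[OF assms] by blast
  then have "distinct xs" by (simp add: strict_sorted_iff)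
  then have "length xs = card A" using xs distinct_card by fastforce
  with xs that show ?thesis by blast
qed

lemma knn_found:
  assumes "finite A" "finite C" "card A = n" "card C = n"
    and "\<forall>a\<in>A. \<forall>b\<in>C. a < b \<and> (a,b) \<in> E"
  shows "ocontains (oKnn n) E"
proof -
  obtain xs where xs: "sorted_wrt (<) xs" "set xs = A" "length xs = n"
    using sorted_enum[OF assms(1)] assms(3) by metis
  obtain ys where ys: "sorted_wrt (<) ys" "set ys = C" "length ys = n"
    using sorted_enum[OF assms(2)] assms(4) by metis
  define f where "f i = (if i \<le> n then xs ! (i - 1) else ys ! (i - n - 1))" for i
  have sm: "strict_mono_on {1..fst (oKnn n)} f"
  proof (rule strict_mono_onI)
    fix i j assume ij: "i \<in> {1..fst (oKnn n)}" "j \<in> {1..fst (oKnn n)}" "i < j"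
    then have r: "1 \<le> i" "j \<le> 2*n" by (auto simp: oKnn_def)
    show "f i < f j"
    proof (cases "j \<le> n")
      case True
      then show ?thesis using ij r sorted_wrt_nth_less[OF xs(1), of "i-1" "j-1"] xs(3)
        by (auto simp: f_def)
    next
      case jn: False
      show ?thesis
      proof (cases "i \<le> n")
        case True
        have "xs ! (i-1) \<in> A" using xs True r by auto
        moreover have "ys ! (j - n - 1) \<in> C" using ys jn r by auto
        ultimately show ?thesis using True jn assms(5) by (auto simp: f_def)
      next
        case False
        then show ?thesis using ij r jn sorted_wrt_nth_less[OF ys(1), of "i-n-1" "j-n-1"] ys(3)
          by (auto simp: f_def)
      qed
    qed
  qed
  have ed: "\<forall>(i,j)\<in>snd (oKnn n). (f i, f j) \<in> E"
  proof (clarsimp simp: oKnn_def)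
    fix i j assume h: "Suc 0 \<le> i" "i \<le> n" "n < j" "j \<le> 2*n"
    have "xs ! (i-1) \<in> A" using xs h by auto
    moreover have "ys ! (j - n - 1) \<in> C" using ys h by auto
    ultimately show "(f i, f j) \<in> E" using h assms(5) by (auto simp: f_def)
  qed
  show ?thesis unfolding ocontains_def using sm ed by blast
qed

lemma split_set:
  fixes J :: "nat set"
  assumes "finite J" "2*n \<le> card J"
  obtains A C where "A \<subseteq> J" "C \<subseteq> J" "card A = n" "card C = n" "finite A" "finite C"
    "\<forall>a\<in>A. \<forall>c\<in>C. a < c"
proof -
  obtain xs where xs: "sorted_wrt (<) xs" "set xs = J" "length xs = card J"
    using sorted_enum[OF assms(1)] by metis
  have d: "distinct xs" using xs(1) by (simp add: strict_sorted_iff)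
  let ?A = "set (take n xs)"
  let ?C = "set (take n (drop n xs))"
  have "card ?A = n" using d xs(3) assms(2) by (simp add: distinct_card)
  moreover have "card ?C = n" using d xs(3) assms(2) by (simp add: distinct_card)
  moreover have "?A \<subseteq> J" "?C \<subseteq> J" using xs(2) set_take_subset set_drop_subset by (fastforce+)
  moreover have "\<forall>a\<in>?A. \<forall>c\<in>?C. a < c"
  proof (intro ballI)
    fix a c assume a: "a \<in> ?A" and c: "c \<in> ?C"
    obtain i where i: "i < n" "a = xs ! i" using a xs(3) assms(2) by (auto simp: in_set_conv_nth)
    obtain i' where i': "i' < n" "c = xs ! (n + i')" using c xs(3) assms(2) by (auto simp: in_set_conv_nth)
    show "a < c" using sorted_wrt_nth_less[OF xs(1), of i "n+i'"] i i' xs(3) assms(2) by auto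
  qed
  ultimately show ?thesis using that by blast
qed

lemma layers:
  fixes k n l :: nat and B0 :: "nat set"
  assumes k3: "k \<ge> 3" and n1: "n \<ge> 1" and B0: "finite B0" "card B0 = n"
  shows "\<forall>j A x0 R B. j + r = k - 3 \<longrightarrow> finite A \<longrightarrow> card A = n \<longrightarrow>
     (\<forall>a\<in>A. pathok R l j a \<and> a < x0) \<longrightarrow> (\<forall>b\<in>B0. (l,b) \<in> R \<and> x0 + 2*n*r \<le> b) \<longrightarrow>
     builder_wins_within (ocycle k) (oKnn n) (n^2 + r*(n*(2*n-1))) R B"
proof (induction r)
  case 0
  show ?case
  proof (intro allI impI)
    fix j A x0 R B
    assume j: "j + 0 = k - 3" and A: "finite A" "card A = n"
      and pa: "\<forall>a\<in>A. pathok R l j a \<and> a < x0" and pb: "\<forall>b\<in>B0. (l,b) \<in> R \<and> x0 + 2*n*0 \<le> b"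
    let ?E = "A \<times> B0"
    have fin: "finite ?E" using A B0 by auto
    have lt: "\<forall>(a,b)\<in>?E. a < b" using pa pb by fastforce
    have "builder_wins_within (ocycle k) (oKnn n) (0 + card ?E) R B"
    proof (rule batch[OF fin lt])
      fix F assume F: "F \<subseteq> ?E"
      show "builder_wins_within (ocycle k) (oKnn n) 0 (R \<union> F) (B \<union> (?E - F))"
      proof (cases "F = {}")
        case True
        have "ocontains (oKnn n) (B \<union> (?E - F))"
          by (rule knn_found[OF A(1) B0(1) A(2) B0(2)]) (use pa pb True in fastforce)
        then show ?thesis by (simp add: builder_won_def)
      next
        case False
        then obtain a b where ab: "(a,b) \<in> F" by auto
        then have ab': "a \<in> A" "b \<in> B0" using F by auto
        have "pathok (R \<union> F) l j a" using pa ab' pathok_mono by blast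
        moreover have "a < b" using pa pb ab' by fastforce
        ultimately have "pathok (R \<union> F) l (Suc j) b" using ab unfolding pathok.simps by blast
        moreover have "Suc j = k - 2" using j k3 by auto
        ultimately have "ocontains (ocycle k) (R \<union> F)"
          using cycle_found[OF k3, of "R \<union> F" l b] pb ab' by auto
        then show ?thesis by (simp add: builder_won_def)
      qed
    qed
    moreover have "card ?E = n^2" using A B0 by (simp add: card_cartesian_product power2_eq_square)
    ultimately show "builder_wins_within (ocycle k) (oKnn n) (n^2 + 0*(n*(2*n-1))) R B" by simp
  qed
next
  case (Suc r)
  show ?case
  proof (intro allI impI)
    fix j A x0 R0 B0'
    assume j: "j + Suc r = k - 3" and A: "finite A" "card A = n"
      and pa0: "\<forall>a\<in>A. pathok R0 l j a \<and> a < x0" and pb0: "\<forall>b\<in>B0. (l,b) \<in> R0 \<and> x0 + 2*n*Suc r \<le> b"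
    let ?rest = "n^2 + r*(n*(2*n-1))"
    have inner: "\<forall>p R B. p + d = 2*n - 1 \<longrightarrow> (\<forall>i<p. \<forall>a\<in>A. (a, x0+i) \<in> R \<union> B) \<longrightarrow>
       (\<forall>a\<in>A. pathok R l j a) \<longrightarrow> (\<forall>b\<in>B0. (l,b) \<in> R) \<longrightarrow>
       builder_wins_within (ocycle k) (oKnn n) (n*d + ?rest) R B" for d
    proof (induction d rule: less_induct)
      case (less d)
      show ?case
      proof (intro allI impI)
        fix p R B
        assume pd: "p + d = 2*n - 1" and inv: "\<forall>i<p. \<forall>a\<in>A. (a, x0+i) \<in> R \<union> B"
          and pa: "\<forall>a\<in>A. pathok R l j a" and pb: "\<forall>b\<in>B0. (l,b) \<in> R"
        define N where "N = {i. i < p \<and> (\<forall>a\<in>A. (a, x0+i) \<in> B)}"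
        define Act where "Act = {i. i < p \<and> (\<exists>a\<in>A. (a, x0+i) \<in> R)}"
        have finN: "finite N" and finAct: "finite Act" unfolding N_def Act_def by auto
        show "builder_wins_within (ocycle k) (oKnn n) (n*d + ?rest) R B"
        proof (cases "n \<le> card N")
          case True
          then obtain N' where N': "N' \<subseteq> N" "card N' = n" "finite N'"
            by (metis obtain_subset_with_card_n)
          have "card ((+) x0 ` N') = n" using N' by (simp add: card_image)
          have "ocontains (oKnn n) B"
          proof (rule knn_found[OF A(1) _ A(2)])
            show "finite ((+) x0 ` N')" using N' by auto
            show "card ((+) x0 ` N') = n" using N' by (simp add: card_image)
            show "\<forall>a\<in>A. \<forall>b\<in>(+) x0 ` N'. a < b \<and> (a, b) \<in> B"
              using N' pa0 unfolding N_def by fastforce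
          qed
          then show ?thesis by (intro won_wins) (simp add: builder_won_def)
        next
          case cN: False
          show ?thesis
          proof (cases "n \<le> card Act")
            case True
            then obtain Act' where Act': "Act' \<subseteq> Act" "card Act' = n" "finite Act'"
              by (metis obtain_subset_with_card_n)
            have "builder_wins_within (ocycle k) (oKnn n) ?rest R B"
            proof (rule Suc.IH[THEN spec[of _ "Suc j"], THEN spec[of _ "(+) x0 ` Act'"], THEN spec[of _ "x0 + 2*n"], THEN spec[of _ R], THEN spec[of _ B], rule_format])
              show "Suc j + r = k - 3" using j by simp
              show "finite ((+) x0 ` Act')" using Act' by auto
              show "card ((+) x0 ` Act') = n" using Act' by (simp add: card_image)
              fix a assume "a \<in> (+) x0 ` Act'"
              then obtain i where i: "i \<in> Act" "a = x0 + i" using Act' by auto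
              then obtain u where u: "u \<in> A" "(u, x0+i) \<in> R" "i < p" unfolding Act_def by auto
              have "u < x0 + i" using pa0 u by auto
              then have "pathok R l (Suc j) a" using u pa i by auto
              moreover have "a < x0 + 2*n" using i u pd by auto
              ultimately show "pathok R l (Suc j) a \<and> a < x0 + 2 * n" by blast
            qed (use pb pb0 in \<open>auto simp: algebra_simps\<close>)
            then show ?thesis by (rule wins_le) simp
          next
            case cA: False
            have sub: "{..<p} \<subseteq> N \<union> Act"
            proof
              fix i assume "i \<in> {..<p}"
              then show "i \<in> N \<union> Act" using inv unfolding N_def Act_def by blast
            qed
            have "p = card {..<p}" by simp
            also have "\<dots> \<le> card (N \<union> Act)" using sub finN finAct by (intro card_mono) auto
            also have "\<dots> \<le> card N + card Act" by (rule card_Un_le)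
            finally have "p \<le> card N + card Act" .
            with cN cA pd obtain d' where d': "d = Suc d'" by (cases d) auto
            let ?E = "(\<lambda>a. (a, x0+p)) ` A"
            have fin: "finite ?E" using A by auto
            have lt: "\<forall>(a,b)\<in>?E. a < b" using pa0 by auto
            have cE: "card ?E = n" using A by (simp add: card_image inj_on_def)
            have "builder_wins_within (ocycle k) (oKnn n) (n*d' + ?rest + card ?E) R B"
            proof (rule batch[OF fin lt])
              fix F assume F: "F \<subseteq> ?E"
              show "builder_wins_within (ocycle k) (oKnn n) (n*d' + ?rest) (R \<union> F) (B \<union> (?E - F))"
              proof (rule less.IH[of d', THEN spec[of _ "Suc p"], THEN spec[of _ "R \<union> F"], THEN spec[of _ "B \<union> (?E - F)"], rule_format])
                show "d' < d" using d' by simp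
                show "Suc p + d' = 2 * n - 1" using pd d' by simp
              qed (use inv pa pathok_mono pb in \<open>auto simp: less_Suc_eq\<close>)
            qed
            then show ?thesis using cE d' by (simp add: algebra_simps)
          qed
        qed
      qed
    qed
    have "builder_wins_within (ocycle k) (oKnn n) (n*(2*n-1) + ?rest) R0 B0'"
      using inner[of "2*n-1", rule_format, of 0 R0 B0'] pa0 pb0 by auto
    moreover have "n*(2*n-1) + ?rest = n^2 + Suc r * (n*(2*n-1))" by (simp only: mult_Suc add_ac)
    ultimately show "builder_wins_within (ocycle k) (oKnn n) (n\<^sup>2 + Suc r * (n * (2 * n - 1))) R0 B0'"
      by metis
  qed
qed

lemma cand_phase:
  fixes k n :: nat
  assumes k3: "k \<ge> 3" and n1: "n \<ge> 1"
  defines "D \<equiv> 2*n*k + n + 1"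
  defines "Fin \<equiv> n^2 + (k-3)*(n*(2*n-1))"
  shows "\<forall>p R B. p + d = 2*n^2 \<longrightarrow> (\<forall>j<p. \<forall>l<n. (l, D * Suc j) \<in> R \<union> B) \<longrightarrow>
     builder_wins_within (ocycle k) (oKnn n) (n*d + Fin) R B"
proof (induction d rule: less_induct)
  case (less d)
  show ?case
  proof (intro allI impI)
    fix p R B
    assume pd: "p + d = 2*n^2" and inv: "\<forall>j<p. \<forall>l<n. (l, D * Suc j) \<in> R \<union> B"
    define cand where "cand j = D * Suc j" for j
    have "D > 0" unfolding D_def by simp
    then have inj: "inj cand" unfolding cand_def inj_def by simp
    have lc: "l < cand j" if "l < n" for l j
    proof -
      have "D \<le> D * Suc j" by simp
      then show ?thesis using that unfolding cand_def D_def by linarith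
    qed
    define Good where "Good = {j. j < p \<and> (\<forall>l<n. (l, cand j) \<in> B)}"
    define S where "S l = {j. j < p \<and> (l, cand j) \<in> R}" for l
    have finG: "finite Good" unfolding Good_def by auto
    have finS: "finite (S l)" for l unfolding S_def by auto
    show "builder_wins_within (ocycle k) (oKnn n) (n*d + Fin) R B"
    proof (cases "n \<le> card Good")
      case True
      then obtain G' where G': "G' \<subseteq> Good" "card G' = n" "finite G'"
        by (metis obtain_subset_with_card_n)
      have "ocontains (oKnn n) B"
      proof (rule knn_found[of "{..<n}"])
        show "finite (cand ` G')" using G' by auto
        show "card (cand ` G') = n" using G' inj by (simp add: card_image inj_on_subset)
        show "\<forall>a\<in>{..<n}. \<forall>b\<in>cand ` G'. a < b \<and> (a, b) \<in> B"
          using G' lc unfolding Good_def by auto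
      qed auto
      then show ?thesis by (intro won_wins) (simp add: builder_won_def)
    next
      case cG: False
      show ?thesis
      proof (cases "\<exists>l<n. 2*n \<le> card (S l)")
        case True
        then obtain l where l: "l < n" "2*n \<le> card (S l)" by blast
        obtain A0 C0 where AC: "A0 \<subseteq> S l" "C0 \<subseteq> S l" "card A0 = n" "card C0 = n"
          "finite A0" "finite C0" "\<forall>a\<in>A0. \<forall>c\<in>C0. a < c"
          using split_set[OF finS l(2)] by blast
        have "A0 \<noteq> {}" using AC n1 by auto
        define i0 where "i0 = Max A0"
        have i0: "i0 \<in> A0" "\<forall>i\<in>A0. i \<le> i0" using AC \<open>A0 \<noteq> {}\<close> unfolding i0_def by auto
        have "builder_wins_within (ocycle k) (oKnn n) (n^2 + (k-3)*(n*(2*n-1))) R B"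
        proof (rule layers[OF k3 n1, of "cand ` C0" "k-3", THEN spec[of _ 0], THEN spec[of _ "cand ` A0"],
              THEN spec[of _ "cand i0 + 1"], THEN spec[of _ R], THEN spec[of _ B], rule_format])
          show "finite (cand ` C0)" using AC by auto
          show "card (cand ` C0) = n" using AC inj by (simp add: card_image inj_on_subset)
          show "finite (cand ` A0)" using AC by auto
          show "card (cand ` A0) = n" using AC inj by (simp add: card_image inj_on_subset)
          show "0 + (k - 3) = k - 3" by simp
          fix a assume "a \<in> cand ` A0"
          then obtain i where i: "i \<in> A0" "a = cand i" by auto
          have "pathok R l 0 a" using i AC(1) lc[OF l(1)] unfolding S_def by auto
          moreover have "a < cand i0 + 1"
          proof -
            have "i \<le> i0" using i i0 by auto
            then have "D * Suc i \<le> D * Suc i0" by (intro mult_le_mono2) simp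
            then show ?thesis using i unfolding cand_def by linarith
          qed
          ultimately show "pathok R l 0 a \<and> a < cand i0 + 1" by blast
        next
          fix b assume "b \<in> cand ` C0"
          then obtain c where c: "c \<in> C0" "b = cand c" by auto
          have "(l, b) \<in> R" using c AC(2) unfolding S_def by auto
          moreover have "cand i0 + 1 + 2*n*(k-3) \<le> b"
          proof -
            have "i0 < c" using AC(7) i0 c by auto
            then have h1: "D * Suc (Suc i0) \<le> D * Suc c" by (intro mult_le_mono2) simp
            have h2: "D * Suc (Suc i0) = D + D * Suc i0" by (rule mult_Suc_right)
            have "2*n*(k-3) \<le> 2*n*k" by simp
            then have h3: "2*n*(k-3) + 1 \<le> D" unfolding D_def by linarith
            show ?thesis using h1 h2 h3 c unfolding cand_def by linarith
          qed
          ultimately show "(l, b) \<in> R \<and> cand i0 + 1 + 2 * n * (k - 3) \<le> b" by blast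
        qed
        then show ?thesis unfolding Fin_def by (rule wins_le) simp
      next
        case cS: False
        have sub: "{..<p} \<subseteq> Good \<union> (\<Union>l<n. S l)"
        proof
          fix j assume j: "j \<in> {..<p}"
          show "j \<in> Good \<union> (\<Union>l<n. S l)"
          proof (cases "\<forall>l<n. (l, cand j) \<in> B")
            case True then show ?thesis using j unfolding Good_def by auto
          next
            case False
            then obtain l where "l < n" "(l, cand j) \<notin> B" by auto
            then have "(l, cand j) \<in> R" using inv j unfolding cand_def by auto
            then show ?thesis using j \<open>l < n\<close> unfolding S_def by auto
          qed
        qed
        have "p = card {..<p}" by simp
        also have "\<dots> \<le> card (Good \<union> (\<Union>l<n. S l))" using sub finG finS by (intro card_mono) auto
        also have "\<dots> \<le> card Good + card (\<Union>l<n. S l)" by (rule card_Un_le)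
        also have "card (\<Union>l<n. S l) \<le> (\<Sum>l<n. card (S l))" by (rule card_UN_le) simp
        also have "(\<Sum>l<n. card (S l)) \<le> card {..<n} * (2*n - 1)"
          using sum_bounded_above[of "{..<n}" "\<lambda>l. card (S l)" "2*n-1"] cS by fastforce
        finally have "p \<le> card Good + n * (2*n-1)" by simp
        moreover have "n*(2*n-1) + n = 2*n^2" using n1
          by (cases n) (auto simp: power2_eq_square algebra_simps)
        ultimately obtain d' where d': "d = Suc d'" using cG pd by (cases d) auto
        let ?E = "(\<lambda>l. (l, cand p)) ` {..<n}"
        have fin: "finite ?E" by auto
        have lt: "\<forall>(a,b)\<in>?E. a < b" using lc by auto
        have cE: "card ?E = n" by (simp add: card_image inj_on_def)
        have "builder_wins_within (ocycle k) (oKnn n) (n*d' + Fin + card ?E) R B"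
        proof (rule batch[OF fin lt])
          fix F assume F: "F \<subseteq> ?E"
          show "builder_wins_within (ocycle k) (oKnn n) (n*d' + Fin) (R \<union> F) (B \<union> (?E - F))"
          proof (rule less.IH[of d', THEN spec[of _ "Suc p"], THEN spec[of _ "R \<union> F"],
                THEN spec[of _ "B \<union> (?E - F)"], rule_format])
            show "d' < d" using d' by simp
            show "Suc p + d' = 2 * n^2" using pd d' by simp
          qed (use inv in \<open>auto simp: less_Suc_eq cand_def\<close>)
        qed
        then show ?thesis using cE d' by (simp add: algebra_simps)
      qed
    qed
  qed
qed

theorem theorem4:
  fixes k n :: nat
  assumes "k \<ge> 3" and "n \<ge> 1"
  shows "online_ordered_ramsey (ocycle k) (oKnn n)
           \<le> enat (2 * n ^ 3 + (k - 3) * n * (2 * n - 1) + n ^ 2)"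
proof -
  have "builder_wins_within (ocycle k) (oKnn n) (n*(2*n^2) + (n^2 + (k-3)*(n*(2*n-1)))) {} {}"
    using cand_phase[OF assms, of "2*n^2", THEN spec[of _ 0], THEN spec[of _ "{}"], THEN spec[of _ "{}"]]
    by simp
  moreover have "n*(2*n^2) + (n^2 + (k-3)*(n*(2*n-1))) = 2 * n ^ 3 + (k - 3) * n * (2 * n - 1) + n ^ 2"
    by (simp add: power2_eq_square power3_eq_cube mult.assoc)
  ultimately have "builder_wins_within (ocycle k) (oKnn n) (2 * n ^ 3 + (k - 3) * n * (2 * n - 1) + n ^ 2) {} {}"
    by metis
  then show ?thesis unfolding online_ordered_ramsey_def by (intro INF_lower) simp
qed

end
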